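(* Let $\mathcal{B}=(v_1,\dots,v_N)$ be a template database with $v_1,\dots,v_N$ independent and uniform in $\mathbb{Z}_2^n$, and let $\varepsilon\ge 0$. The probability that there exists an $(N,\varepsilon)$-master template, i.e. a $t\in\mathbb{Z}_2^n$ with $d_{\mathcal H}(v_i,t)\le\varepsilon$ for all $i$, is $$\mathbb{P}(\mathcal{B}\subset B_\varepsilon)=\frac{1}{2^{n(N-1)}}\sum_{B\in\mathcal{C}(\varepsilon,N)}\left|B^\cap_\varepsilon(B)\right|^{-1},$$ where for $B=(w_1,\dots,w_N)$, $B_\varepsilon^\cap(B)=\bigcap_{i=1}^N B_\varepsilon(w_i)$. Moreover $$V_\varepsilon^{N-1}\le\mathbb{P}(\mathcal{B}\subset B_\varepsilon)\le V_{2\varepsilon}^{N-1}.$$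
   Context: $d_{\mathcal H}$ is the Hamming distance on $\mathbb{Z}_2^n$ and $B_\varepsilon(t)=\{y:d_{\mathcal H}(t,y)\le\varepsilon\}$. $\mathcal{C}(\varepsilon,N)=\{B=(w_1,\dots,w_N)\in(\mathbb{Z}_2^n)^N : \{w_1,\dots,w_N\}\subset B_\varepsilon\}$ where $B_\varepsilon$ is a fixed Hamming ball of radius $\varepsilon$ (for instance centered at $0$). $V_r=\frac{1}{2^n}\sum_{k=0}^{r}\binom nk$ is the measure of a ball of radius $r$. The event "$\mathcal{B}\subset B_\varepsilon$" means that all templates of $\mathcal B$ lie in some common ball of radius $\varepsilon$. *)

theory Defs
  imports "HOL-Probability.Probability_Mass_Function"
begin

text \<open>Elements of Z_2^n are boolean lists of length n.\<close>
definition cube :: "nat \<Rightarrow> bool list set" where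
  "cube n = {x. length x = n}"

definition hamming :: "bool list \<Rightarrow> bool list \<Rightarrow> nat" where
  "hamming x y = card {i. i < length x \<and> x ! i \<noteq> y ! i}"

definition hball :: "nat \<Rightarrow> nat \<Rightarrow> bool list \<Rightarrow> bool list set" where
  "hball n r t = {y \<in> cube n. hamming t y \<le> r}"

definition tuples :: "nat \<Rightarrow> nat \<Rightarrow> bool list list set" where
  "tuples n N = {B. length B = N \<and> set B \<subseteq> cube n}"

definition Cset :: "nat \<Rightarrow> nat \<Rightarrow> nat \<Rightarrow> bool list list set" where
  "Cset n eps N = {B \<in> tuples n N. set B \<subseteq> hball n eps (replicate n False)}"

definition ball_inter :: "nat \<Rightarrow> nat \<Rightarrow> bool list list \<Rightarrow> bool list set" where
  "ball_inter n eps B = {y \<in> cube n. \<forall>i < length B. y \<in> hball n eps (B ! i)}"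

definition has_master :: "nat \<Rightarrow> nat \<Rightarrow> bool list list \<Rightarrow> bool" where
  "has_master n eps B = (\<exists>t \<in> cube n. \<forall>i < length B. hamming (B ! i) t \<le> eps)"

text \<open>Measure of a Hamming ball of radius r.\<close>
definition Vol :: "nat \<Rightarrow> nat \<Rightarrow> real" where
  "Vol n r = (\<Sum>k\<le>r. real (n choose k)) / 2 ^ n"

definition database :: "nat \<Rightarrow> nat \<Rightarrow> bool list list pmf" where
  "database n N = pmf_of_set (tuples n N)"

end

theory Submission
  imports Defs
begin

definition xv :: "bool list \<Rightarrow> bool list \<Rightarrow> bool list" where
  "xv t x = map2 (\<noteq>) t x"

abbreviation z :: "nat \<Rightarrow> bool list" where "z n \<equiv> replicate n False"

lemma finite_cube: "finite (cube n)"
proof -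
  have "cube n = {xs. set xs \<subseteq> (UNIV::bool set) \<and> length xs = n}" by (auto simp: cube_def)
  thus ?thesis using finite_lists_length_eq[of "UNIV::bool set" n] by simp
qed

lemma card_cube: "card (cube n) = 2 ^ n"
proof -
  have "cube n = {xs. set xs \<subseteq> (UNIV::bool set) \<and> length xs = n}" by (auto simp: cube_def)
  thus ?thesis using card_lists_length_eq[of "UNIV::bool set" n] by simp
qed

lemma tuples_eq: "tuples n N = {xs. set xs \<subseteq> cube n \<and> length xs = N}"
  by (auto simp: tuples_def)

lemma finite_tuples: "finite (tuples n N)"
  unfolding tuples_eq using finite_lists_length_eq[OF finite_cube] .

lemma card_tuples: "card (tuples n N) = 2 ^ (n * N)"
  unfolding tuples_eq using card_lists_length_eq[OF finite_cube] by (simp add: card_cube power_mult)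

lemma xv_len[simp]: "length (xv t x) = min (length t) (length x)"
  by (simp add: xv_def)

lemma xv_nth[simp]: "i < length t \<Longrightarrow> i < length x \<Longrightarrow> xv t x ! i = (t ! i \<noteq> x ! i)"
  by (simp add: xv_def)

lemma xv_cube: "t \<in> cube n \<Longrightarrow> x \<in> cube n \<Longrightarrow> xv t x \<in> cube n"
  by (simp add: cube_def)

lemma xv_inv: "t \<in> cube n \<Longrightarrow> x \<in> cube n \<Longrightarrow> xv t (xv t x) = x"
  by (rule nth_equalityI) (auto simp: cube_def)

lemma xv_z: "t \<in> cube n \<Longrightarrow> xv t (z n) = t"
  by (rule nth_equalityI) (auto simp: cube_def)

lemma hamming_xv: "t \<in> cube n \<Longrightarrow> x \<in> cube n \<Longrightarrow> y \<in> cube n \<Longrightarrow>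
   hamming (xv t x) (xv t y) = hamming x y"
  unfolding hamming_def by (rule arg_cong[where f=card]) (auto simp: cube_def)

lemma hamming_sym: "length x = length y \<Longrightarrow> hamming x y = hamming y x"
  unfolding hamming_def by metis

lemma hamming_tri: "length x = length y \<Longrightarrow> length y = length w \<Longrightarrow>
   hamming x w \<le> hamming x y + hamming y w"
proof -
  assume l: "length x = length y" "length y = length w"
  have "{i. i < length x \<and> x ! i \<noteq> w ! i} \<subseteq> {i. i < length x \<and> x ! i \<noteq> y ! i} \<union> {i. i < length y \<and> y ! i \<noteq> w ! i}"
    using l by auto
  hence "card {i. i < length x \<and> x ! i \<noteq> w ! i} \<le> card ({i. i < length x \<and> x ! i \<noteq> y ! i} \<union> {i. i < length y \<and> y ! i \<noteq> w ! i})"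
    by (intro card_mono) auto
  also have "\<dots> \<le> card {i. i < length x \<and> x ! i \<noteq> y ! i} + card {i. i < length y \<and> y ! i \<noteq> w ! i}"
    by (rule card_Un_le)
  finally show ?thesis unfolding hamming_def .
qed

lemma hamming_self: "hamming x x = 0"
  by (simp add: hamming_def)

lemma card_subsets_le: "card {S. S \<subseteq> {..<n} \<and> card S \<le> r} = (\<Sum>k\<le>r. n choose k)"
proof (induction r)
  case 0
  have "{S. S \<subseteq> {..<n} \<and> card S \<le> 0} = {{}}"
    by (auto dest: finite_subset)
  thus ?case by simp
next
  case (Suc r)
  have "{S. S \<subseteq> {..<n} \<and> card S \<le> Suc r} = {S. S \<subseteq> {..<n} \<and> card S \<le> r} \<union> {S. S \<subseteq> {..<n} \<and> card S = Suc r}"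
    by auto
  moreover have "finite {S. S \<subseteq> {..<n} \<and> card S \<le> r}" by simp
  moreover have "finite {S. S \<subseteq> {..<n} \<and> card S = Suc r}" by simp
  ultimately have "card {S. S \<subseteq> {..<n} \<and> card S \<le> Suc r} = card {S. S \<subseteq> {..<n} \<and> card S \<le> r} + card {S. S \<subseteq> {..<n} \<and> card S = Suc r}"
    by (simp add: card_Un_disjoint disjoint_iff)
  also have "card {S. S \<subseteq> {..<n} \<and> card S = Suc r} = n choose Suc r"
    using n_subsets[of "{..<n}" "Suc r"] by simp
  finally show ?case using Suc by simp
qed

lemma hamming_z: "length y = n \<Longrightarrow> hamming (z n) y = card {i. i < n \<and> y ! i}"
  unfolding hamming_def by (rule arg_cong[where f=card]) auto

lemma card_hball_z: "card (hball n r (z n)) = (\<Sum>k\<le>r. n choose k)"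
proof -
  have "bij_betw (\<lambda>y. {i. i < n \<and> y ! i}) (hball n r (z n)) {S. S \<subseteq> {..<n} \<and> card S \<le> r}"
  proof (rule bij_betw_byWitness[where f'="\<lambda>S. map (\<lambda>i. i \<in> S) [0..<n]"])
    show "\<forall>a\<in>hball n r (z n). map (\<lambda>i. i \<in> {i. i < n \<and> a ! i}) [0..<n] = a"
      by (auto simp: hball_def cube_def intro!: nth_equalityI)
    show "\<forall>a'\<in>{S. S \<subseteq> {..<n} \<and> card S \<le> r}. {i. i < n \<and> map (\<lambda>i. i \<in> a') [0..<n] ! i} = a'"
      by auto
    show "(\<lambda>y. {i. i < n \<and> y ! i}) ` hball n r (z n) \<subseteq> {S. S \<subseteq> {..<n} \<and> card S \<le> r}"
      by (auto simp: hball_def cube_def hamming_z)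
    show "(\<lambda>S. map (\<lambda>i. i \<in> S) [0..<n]) ` {S. S \<subseteq> {..<n} \<and> card S \<le> r} \<subseteq> hball n r (z n)"
    proof
      fix y assume "y \<in> (\<lambda>S. map (\<lambda>i. i \<in> S) [0..<n]) ` {S. S \<subseteq> {..<n} \<and> card S \<le> r}"
      then obtain S where S: "S \<subseteq> {..<n}" "card S \<le> r" "y = map (\<lambda>i. i \<in> S) [0..<n]" by blast
      have "{i. i < n \<and> y ! i} = S" using S by auto
      moreover have "length y = n" using S by simp
      ultimately show "y \<in> hball n r (z n)" using S by (simp add: hball_def cube_def hamming_z)
    qed
  qed
  from bij_betw_same_card[OF this] show ?thesis by (simp only: card_subsets_le)
qed

lemma card_hball: "t \<in> cube n \<Longrightarrow> card (hball n r t) = (\<Sum>k\<le>r. n choose k)"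
proof -
  assume t: "t \<in> cube n"
  have z: "z n \<in> cube n" by (simp add: cube_def)
  have "bij_betw (xv t) (hball n r (z n)) (hball n r t)"
  proof (rule bij_betw_byWitness[where f'="xv t"])
    show "\<forall>a\<in>hball n r (z n). xv t (xv t a) = a" using t by (auto simp: hball_def xv_inv)
    show "\<forall>a\<in>hball n r t. xv t (xv t a) = a" using t by (auto simp: hball_def xv_inv)
    show "xv t ` hball n r (z n) \<subseteq> hball n r t"
    proof
      fix y assume "y \<in> xv t ` hball n r (z n)"
      then obtain a where a: "a \<in> cube n" "hamming (z n) a \<le> r" "y = xv t a" by (auto simp: hball_def)
      have "hamming t (xv t a) = hamming (xv t (z n)) (xv t a)" using t by (simp add: xv_z)
      also have "\<dots> = hamming (z n) a" using t a z by (simp only: hamming_xv)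
      finally show "y \<in> hball n r t" using a t by (auto simp: hball_def xv_cube)
    qed
    show "xv t ` hball n r t \<subseteq> hball n r (z n)"
    proof
      fix y assume "y \<in> xv t ` hball n r t"
      then obtain a where a: "a \<in> cube n" "hamming t a \<le> r" "y = xv t a" by (auto simp: hball_def)
      have "xv t t = z n" using t by (auto simp: cube_def intro!: nth_equalityI)
      hence "hamming (z n) (xv t a) = hamming (xv t t) (xv t a)" by simp
      also have "\<dots> = hamming t a" using t a by (simp only: hamming_xv)
      finally show "y \<in> hball n r (z n)" using a t by (auto simp: hball_def xv_cube)
    qed
  qed
  from bij_betw_same_card[OF this] show ?thesis by (simp only: card_hball_z)
qed


lemma has_master_set: "has_master n eps B = (\<exists>t\<in>cube n. \<forall>w\<in>set B. hamming w t \<le> eps)"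
  unfolding has_master_def by (metis in_set_conv_nth)

lemma ball_inter_set: "ball_inter n eps B = {t. t \<in> cube n \<and> (\<forall>w\<in>set B. hamming w t \<le> eps)}"
  unfolding ball_inter_def hball_def by (auto simp: cube_def in_set_conv_nth) (metis in_set_conv_nth)

lemma xv_twice_list: "t \<in> cube n \<Longrightarrow> set B \<subseteq> cube n \<Longrightarrow> map (xv t) (map (xv t) B) = B"
  by (auto simp: xv_inv intro!: map_idI)

lemma xv_self: "t \<in> cube n \<Longrightarrow> xv t t = z n"
  by (auto simp: cube_def intro!: nth_equalityI)

lemma z_cube: "z n \<in> cube n" by (simp add: cube_def)

lemma bij_T:
  assumes t: "t \<in> cube n" and B: "set B \<subseteq> cube n"
  shows "bij_betw (xv t) (ball_inter n eps B) (ball_inter n eps (map (xv t) B))"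
proof (rule bij_betw_byWitness[where f'="xv t"])
  show "\<forall>a\<in>ball_inter n eps B. xv t (xv t a) = a" using t by (auto simp: ball_inter_set xv_inv)
  show "\<forall>a\<in>ball_inter n eps (map (xv t) B). xv t (xv t a) = a" using t by (auto simp: ball_inter_set xv_inv)
  show "xv t ` ball_inter n eps B \<subseteq> ball_inter n eps (map (xv t) B)"
  proof
    fix y assume "y \<in> xv t ` ball_inter n eps B"
    then obtain a where a: "a \<in> cube n" "\<forall>w\<in>set B. hamming w a \<le> eps" "y = xv t a"
      by (auto simp: ball_inter_set)
    have "\<forall>w\<in>set B. hamming (xv t w) (xv t a) \<le> eps"
      using a B t by (auto simp: hamming_xv)
    thus "y \<in> ball_inter n eps (map (xv t) B)" using a t by (auto simp: ball_inter_set xv_cube)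
  qed
  show "xv t ` ball_inter n eps (map (xv t) B) \<subseteq> ball_inter n eps B"
  proof
    fix y assume "y \<in> xv t ` ball_inter n eps (map (xv t) B)"
    then obtain a where a: "a \<in> cube n" "\<forall>w\<in>set B. hamming (xv t w) a \<le> eps" "y = xv t a"
      by (auto simp: ball_inter_set)
    have "\<forall>w\<in>set B. hamming w (xv t a) \<le> eps"
    proof
      fix w assume w: "w \<in> set B"
      have wc: "w \<in> cube n" using w B by auto
      have "hamming w (xv t a) = hamming (xv t w) (xv t (xv t a))"
        using hamming_xv[OF t wc xv_cube[OF t a(1)]] by simp
      also have "\<dots> = hamming (xv t w) a" using t a by (simp add: xv_inv)
      finally show "hamming w (xv t a) \<le> eps" using a w by simp
    qed
    thus "y \<in> ball_inter n eps B" using a t by (auto simp: ball_inter_set xv_cube)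
  qed
qed

lemma bij_C:
  assumes t: "t \<in> cube n"
  shows "bij_betw (map (xv t)) (Cset n eps N)
     {B. B \<in> {B \<in> tuples n N. has_master n eps B} \<and> (\<forall>w\<in>set B. hamming w t \<le> eps)}"
proof (rule bij_betw_byWitness[where f'="map (xv t)"])
  show "\<forall>a\<in>Cset n eps N. map (xv t) (map (xv t) a) = a"
  proof
    fix a assume "a \<in> Cset n eps N"
    hence "set a \<subseteq> cube n" by (auto simp: Cset_def tuples_def)
    thus "map (xv t) (map (xv t) a) = a" by (rule xv_twice_list[OF t])
  qed
  show "\<forall>a\<in>{B. B \<in> {B \<in> tuples n N. has_master n eps B} \<and> (\<forall>w\<in>set B. hamming w t \<le> eps)}.
           map (xv t) (map (xv t) a) = a"
    using t xv_twice_list[OF t] by (auto simp: tuples_def simp del: map_map)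
  show "map (xv t) ` Cset n eps N \<subseteq> {B. B \<in> {B \<in> tuples n N. has_master n eps B} \<and> (\<forall>w\<in>set B. hamming w t \<le> eps)}"
  proof
    fix y assume "y \<in> map (xv t) ` Cset n eps N"
    then obtain B where B: "length B = N" "set B \<subseteq> hball n eps (z n)" "y = map (xv t) B"
      by (auto simp: Cset_def tuples_def)
    have Bc: "set B \<subseteq> cube n" using B by (auto simp: hball_def)
    have R: "\<forall>w\<in>set y. hamming w t \<le> eps"
    proof
      fix w' assume "w' \<in> set y"
      then obtain w where w: "w \<in> set B" "w' = xv t w" using B by auto
      have wc: "w \<in> cube n" using w Bc by auto
      have "hamming w' t = hamming (xv t w) (xv t (z n))" using w t by (simp add: xv_z)
      also have "\<dots> = hamming w (z n)" using wc t z_cube by (simp only: hamming_xv)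
      also have "\<dots> = hamming (z n) w" using wc by (intro hamming_sym) (simp add: cube_def)
      finally show "hamming w' t \<le> eps" using w B by (auto simp: hball_def)
    qed
    have "y \<in> tuples n N" using B Bc t by (auto simp: tuples_def xv_cube)
    moreover have "has_master n eps y" using R t by (auto simp: has_master_set)
    ultimately show "y \<in> {B. B \<in> {B \<in> tuples n N. has_master n eps B} \<and> (\<forall>w\<in>set B. hamming w t \<le> eps)}"
      using R by simp
  qed
  show "map (xv t) ` {B. B \<in> {B \<in> tuples n N. has_master n eps B} \<and> (\<forall>w\<in>set B. hamming w t \<le> eps)} \<subseteq> Cset n eps N"
  proof
    fix y assume "y \<in> map (xv t) ` {B. B \<in> {B \<in> tuples n N. has_master n eps B} \<and> (\<forall>w\<in>set B. hamming w t \<le> eps)}"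
    then obtain B where B: "length B = N" "set B \<subseteq> cube n" "\<forall>w\<in>set B. hamming w t \<le> eps" "y = map (xv t) B"
      by (auto simp: tuples_def)
    have "set y \<subseteq> hball n eps (z n)"
    proof
      fix w' assume "w' \<in> set y"
      then obtain w where w: "w \<in> set B" "w' = xv t w" using B by auto
      have wc: "w \<in> cube n" using w B by auto
      have "hamming (z n) w' = hamming (xv t t) (xv t w)" using w t by (simp add: xv_self)
      also have "\<dots> = hamming t w" using wc t by (simp only: hamming_xv)
      also have "\<dots> = hamming w t" using wc t by (intro hamming_sym) (simp add: cube_def)
      finally show "w' \<in> hball n eps (z n)" using w B wc t by (auto simp: hball_def xv_cube)
    qed
    thus "y \<in> Cset n eps N" using B by (auto simp: Cset_def tuples_def hball_def)
  qed
qed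

lemma count_formula:
  "real (card {B \<in> tuples n N. has_master n eps B}) =
     2 ^ n * (\<Sum>B \<in> Cset n eps N. 1 / real (card (ball_inter n eps B)))"
proof -
  define M where "M = {B \<in> tuples n N. has_master n eps B}"
  define R where "R = (\<lambda>B t. \<forall>w\<in>set B. hamming w t \<le> eps)"
  define f where "f = (\<lambda>B. 1 / real (card (ball_inter n eps B)))"
  have T: "\<And>B. ball_inter n eps B = {t. t \<in> cube n \<and> R B t}"
    unfolding R_def by (rule ball_inter_set)
  have finM: "finite M" unfolding M_def using finite_tuples by simp
  have "real (card M) = (\<Sum>B\<in>M. 1)" by simp
  also have "\<dots> = (\<Sum>B\<in>M. \<Sum>t\<in>{t. t \<in> cube n \<and> R B t}. f B)"
  proof (rule sum.cong[OF refl])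
    fix B assume "B \<in> M"
    hence ne: "ball_inter n eps B \<noteq> {}" unfolding M_def by (auto simp: has_master_set ball_inter_set)
    have fin: "finite (ball_inter n eps B)" unfolding ball_inter_def using finite_cube by simp
    have "card (ball_inter n eps B) > 0" using ne fin by (simp add: card_gt_0_iff)
    thus "1 = (\<Sum>t\<in>{t. t \<in> cube n \<and> R B t}. f B)" by (simp add: f_def flip: T)
  qed
  also have "\<dots> = (\<Sum>t\<in>cube n. \<Sum>B\<in>{B. B \<in> M \<and> R B t}. f B)"
    by (rule sum.swap_restrict[OF finM finite_cube])
  also have "\<dots> = (\<Sum>t\<in>cube n. \<Sum>B\<in>Cset n eps N. f B)"
  proof (rule sum.cong[OF refl])
    fix t assume t: "t \<in> cube n"
    have bij: "bij_betw (map (xv t)) (Cset n eps N) {B. B \<in> M \<and> R B t}"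
      using bij_C[OF t] unfolding M_def R_def .
    have "(\<Sum>B\<in>Cset n eps N. f (map (xv t) B)) = (\<Sum>B\<in>{B. B \<in> M \<and> R B t}. f B)"
      by (rule sum.reindex_bij_betw[OF bij])
    moreover have "(\<Sum>B\<in>Cset n eps N. f (map (xv t) B)) = (\<Sum>B\<in>Cset n eps N. f B)"
    proof (rule sum.cong[OF refl])
      fix B assume "B \<in> Cset n eps N"
      hence "set B \<subseteq> cube n" by (auto simp: Cset_def tuples_def)
      from bij_betw_same_card[OF bij_T[OF t this, of eps]] show "f (map (xv t) B) = f B"
        by (simp add: f_def)
    qed
    ultimately show "(\<Sum>B\<in>{B. B \<in> M \<and> R B t}. f B) = (\<Sum>B\<in>Cset n eps N. f B)" by simp
  qed
  also have "\<dots> = 2 ^ n * (\<Sum>B\<in>Cset n eps N. f B)" by (simp add: card_cube)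
  finally show ?thesis unfolding M_def f_def .
qed


definition Ev :: "nat \<Rightarrow> nat \<Rightarrow> nat \<Rightarrow> bool list list set" where
  "Ev n r m = (\<lambda>(v,rest). v # rest) ` (SIGMA v:cube n. {rest. set rest \<subseteq> hball n r v \<and> length rest = m})"

lemma card_Ev: "card (Ev n r m) = 2 ^ n * (\<Sum>k\<le>r. n choose k) ^ m"
proof -
  have inj: "inj_on (\<lambda>(v,rest). v # rest) (SIGMA v:cube n. {rest. set rest \<subseteq> hball n r v \<and> length rest = m})"
    by (auto simp: inj_on_def)
  have finh: "\<And>v. finite (hball n r v)" unfolding hball_def using finite_cube by simp
  have "card (Ev n r m) = card (SIGMA v:cube n. {rest. set rest \<subseteq> hball n r v \<and> length rest = m})"
    unfolding Ev_def by (rule card_image[OF inj])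
  also have "\<dots> = (\<Sum>v\<in>cube n. card {rest. set rest \<subseteq> hball n r v \<and> length rest = m})"
    using finite_cube finite_lists_length_eq[OF finh] by simp
  also have "\<dots> = (\<Sum>v\<in>cube n. (\<Sum>k\<le>r. n choose k) ^ m)"
    by (rule sum.cong[OF refl]) (simp add: card_lists_length_eq[OF finh] card_hball)
  also have "\<dots> = 2 ^ n * (\<Sum>k\<le>r. n choose k) ^ m" by (simp add: card_cube)
  finally show ?thesis .
qed

lemma Ev_sub: "Ev n eps m \<subseteq> {B \<in> tuples n (Suc m). has_master n eps B}"
proof
  fix B assume "B \<in> Ev n eps m"
  then obtain v rest where B: "B = v # rest" "v \<in> cube n" "set rest \<subseteq> hball n eps v" "length rest = m"
    unfolding Ev_def by auto
  have "\<forall>w\<in>set B. hamming w v \<le> eps"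
  proof
    fix w assume "w \<in> set B"
    then consider "w = v" | "w \<in> set rest" using B by auto
    thus "hamming w v \<le> eps"
    proof cases
      case 1 thus ?thesis by (simp add: hamming_self)
    next
      case 2
      hence "w \<in> cube n" "hamming v w \<le> eps" using B by (auto simp: hball_def)
      moreover have "hamming w v = hamming v w" using B(2) \<open>w \<in> cube n\<close>
        by (intro hamming_sym) (simp add: cube_def)
      ultimately show ?thesis by simp
    qed
  qed
  hence "has_master n eps B" using B by (auto simp: has_master_set)
  moreover have "B \<in> tuples n (Suc m)" using B by (auto simp: tuples_def hball_def)
  ultimately show "B \<in> {B \<in> tuples n (Suc m). has_master n eps B}" by simp
qed

lemma sub_Ev: "{B \<in> tuples n (Suc m). has_master n eps B} \<subseteq> Ev n (2 * eps) m"
proof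
  fix B assume "B \<in> {B \<in> tuples n (Suc m). has_master n eps B}"
  then obtain t where B: "length B = Suc m" "set B \<subseteq> cube n" "t \<in> cube n" "\<forall>w\<in>set B. hamming w t \<le> eps"
    by (auto simp: tuples_def has_master_set)
  then obtain v rest where vr: "B = v # rest" by (cases B) auto
  have v: "v \<in> cube n" "hamming v t \<le> eps" using B vr by auto
  have "set rest \<subseteq> hball n (2 * eps) v"
  proof
    fix w assume w: "w \<in> set rest"
    hence wc: "w \<in> cube n" "hamming w t \<le> eps" using B vr by auto
    have "hamming v w \<le> hamming v t + hamming t w"
      using v wc B by (intro hamming_tri) (auto simp: cube_def)
    moreover have "hamming t w = hamming w t" using wc B by (intro hamming_sym) (auto simp: cube_def)
    ultimately show "w \<in> hball n (2 * eps) v" using v wc by (auto simp: hball_def)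
  qed
  moreover have "length rest = m" using B vr by simp
  ultimately show "B \<in> Ev n (2 * eps) m" unfolding Ev_def using vr v
    by (auto intro!: image_eqI[where x="(v, rest)"])
qed

theorem theorem9p2:
  fixes n N eps :: nat
  assumes "N \<ge> 1"
  shows "measure_pmf.prob (database n N) {B. has_master n eps B}
           = (1 / 2 ^ (n * (N - 1))) *
             (\<Sum>B \<in> Cset n eps N. 1 / real (card (ball_inter n eps B)))
         \<and> Vol n eps ^ (N - 1) \<le> measure_pmf.prob (database n N) {B. has_master n eps B}
         \<and> measure_pmf.prob (database n N) {B. has_master n eps B} \<le> Vol n (2 * eps) ^ (N - 1)"
proof -
  obtain m where N: "N = Suc m" using assms by (cases N) auto
  define M where "M = {B \<in> tuples n N. has_master n eps B}"
  have ne: "tuples n N \<noteq> {}"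
  proof -
    have "replicate N (z n) \<in> tuples n N" using z_cube[of n] by (auto simp: tuples_def N set_replicate_conv_if)
    thus ?thesis by blast
  qed
  have P: "measure_pmf.prob (database n N) {B. has_master n eps B} = real (card M) / 2 ^ (n * N)"
  proof -
    have "tuples n N \<inter> {B. has_master n eps B} = M" unfolding M_def by auto
    thus ?thesis unfolding database_def
      using measure_pmf_of_set[OF ne finite_tuples] by (simp add: card_tuples)
  qed
  have pow: "(2::real) ^ (n * N) = 2 ^ n * 2 ^ (n * (N - 1))"
    by (simp add: N power_add[symmetric])
  have finM: "finite M" unfolding M_def using finite_tuples by simp
  have V: "\<And>r. Vol n r ^ (N - 1) = real (card (Ev n r m)) / 2 ^ (n * N)"
    unfolding Vol_def card_Ev pow by (simp add: N power_divide power_mult)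
  have eq: "real (card M) / 2 ^ (n * N) = (1 / 2 ^ (n * (N - 1))) *
             (\<Sum>B \<in> Cset n eps N. 1 / real (card (ball_inter n eps B)))"
    unfolding M_def count_formula pow by simp
  have lo: "card (Ev n eps m) \<le> card M"
    using Ev_sub[of n eps m] finM unfolding M_def N by (intro card_mono) auto
  have finE: "finite (Ev n (2 * eps) m)" unfolding Ev_def
    by (rule finite_imageI, rule finite_SigmaI[OF finite_cube])
       (rule finite_lists_length_eq, simp add: hball_def finite_cube)
  have hi: "card M \<le> card (Ev n (2 * eps) m)"
    using sub_Ev[of n m eps] finE unfolding M_def N by (intro card_mono) auto
  show ?thesis unfolding P eq[symmetric] V
    using lo hi by (simp add: divide_right_mono)
qed

end
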